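(* Let $X$ be a finite set with $|X|=n$, $0\notin X$, $W=X\cup\{0\}$. Let $\mathfrak{V}$ be a $\big(\binom{n}{2}_{\,n-2}\ \binom{n}{3}_{\,3}\big)$-configuration whose point set is $\mathcal{P}_2(X)$, and let $\mathfrak{M}$ be the structure with point set $\mathcal{P}_2(W)$ whose lines are the lines of $\mathfrak{V}$ together with all sets $\{\{0,x\},\{0,y\},\{x,y\}\}$ for distinct $x,y\in X$. Let $H$ be a hyperplane of $\mathfrak{M}$. On $X$ define $x\sim y$ iff $x=y$, or $x\neq y$ and $\{x,y\}\in H$. Then $\sim$ is an equivalence relation on $X$.
   Context: $\mathcal{P}_2(Y)$ denotes the set of $2$-element subsets of $Y$. A $(v_r\ b_k)$-configuration is a partial linear space with $v$ points and $b$ lines, each point on exactly $r$ lines and each line containing exactly $k$ points. A subspace is a set of points containing every line that meets it in at least two points; a hyperplane is a proper subspace meeting every line. *)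

theory Defs
  imports Main
begin

definition P2 :: "'a set \<Rightarrow> 'a set set" where
  "P2 Y = {e. e \<subseteq> Y \<and> card e = 2}"

definition partial_linear_space :: "'p set \<Rightarrow> 'p set set \<Rightarrow> bool" where
  "partial_linear_space P L \<longleftrightarrow>
     (\<forall>l\<in>L. l \<subseteq> P \<and> 2 \<le> card l) \<and>
     (\<forall>p\<in>P. \<forall>q\<in>P. p \<noteq> q \<longrightarrow>
        (\<forall>l\<in>L. \<forall>m\<in>L. p \<in> l \<and> q \<in> l \<and> p \<in> m \<and> q \<in> m \<longrightarrow> l = m))"

definition configuration ::
  "'p set \<Rightarrow> 'p set set \<Rightarrow> nat \<Rightarrow> nat \<Rightarrow> nat \<Rightarrow> nat \<Rightarrow> bool" where
  "configuration P L v r b k \<longleftrightarrow>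
     partial_linear_space P L \<and> finite P \<and> finite L \<and>
     card P = v \<and> card L = b \<and>
     (\<forall>p\<in>P. card {l\<in>L. p \<in> l} = r) \<and>
     (\<forall>l\<in>L. card l = k)"

definition subspace :: "'p set \<Rightarrow> 'p set set \<Rightarrow> 'p set \<Rightarrow> bool" where
  "subspace P L S \<longleftrightarrow> S \<subseteq> P \<and>
     (\<forall>l\<in>L. 2 \<le> card (l \<inter> S) \<longrightarrow> l \<subseteq> S)"

definition hyperplane :: "'p set \<Rightarrow> 'p set set \<Rightarrow> 'p set \<Rightarrow> bool" where
  "hyperplane P L H \<longleftrightarrow> subspace P L H \<and> H \<noteq> P \<and>
     (\<forall>l\<in>L. l \<inter> H \<noteq> {})"

end

theory Submission
  imports Defs
begin

lemma two_le_card_pair: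
  assumes "finite S" "p \<in> S" "q \<in> S" "p \<noteq> q"
  shows "2 \<le> card S"
proof -
  have "card {p,q} \<le> card S" using assms by (intro card_mono) auto
  thus ?thesis using assms by simp
qed

theorem lemma3p1:
  fixes X :: "'a set" and z :: 'a and LV :: "'a set set set" and H :: "'a set set"
  assumes "finite X" and "card X = n" and "z \<notin> X"
    and "configuration (P2 X) LV (n choose 2) (n - 2) (n choose 3) 3"
    and "hyperplane (P2 (insert z X))
           (LV \<union> {{{z, x}, {z, y}, {x, y}} | x y. x \<in> X \<and> y \<in> X \<and> x \<noteq> y}) H"
  shows "equiv X {(x, y). x \<in> X \<and> y \<in> X \<and> (x = y \<or> (x \<noteq> y \<and> {x, y} \<in> H))}"
proof -
  let ?L = "LV \<union> {{{z, x}, {z, y}, {x, y}} | x y. x \<in> X \<and> y \<in> X \<and> x \<noteq> y}"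
  have hs: "subspace (P2 (insert z X)) ?L H" and hm: "\<forall>l\<in>?L. l \<inter> H \<noteq> {}"
    using assms(5) unfolding hyperplane_def by simp_all
  have sub: "\<And>l. l \<in> ?L \<Longrightarrow> 2 \<le> card (l \<inter> H) \<Longrightarrow> l \<subseteq> H"
    using hs unfolding subspace_def by blast
  have meet: "l \<inter> H \<noteq> {}" if "l \<in> ?L" for l by (rule bspec[OF hm that])
  have TL: "{{z, a}, {z, b}, {a, b}} \<in> ?L" if "a \<in> X" "b \<in> X" "a \<noteq> b" for a b
  proof -
    have "{{z, a}, {z, b}, {a, b}} \<in> {{{z, x}, {z, y}, {x, y}} | x y. x \<in> X \<and> y \<in> X \<and> x \<noteq> y}"
      using that by blast
    thus ?thesis by (rule UnI2)
  qed
  have two: "{{z, a}, {z, b}, {a, b}} \<subseteq> H"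
    if ab: "a \<in> X" "b \<in> X" "a \<noteq> b" and pq: "p \<in> {{z, a}, {z, b}, {a, b}}" "q \<in> {{z, a}, {z, b}, {a, b}}"
      "p \<noteq> q" "p \<in> H" "q \<in> H" for a b p q
  proof -
    have "2 \<le> card ({{z, a}, {z, b}, {a, b}} \<inter> H)"
      by (rule two_le_card_pair[of _ p q]) (use pq in auto)
    thus ?thesis by (rule sub[OF TL[OF ab]])
  qed
  have d1: "{z,a} \<noteq> {z,b}" if "a \<noteq> b" for a b using that by (simp add: doubleton_eq_iff)
  have d2: "{z,a} \<noteq> {a,b}" if "b \<in> X" for a b using that assms(3) by (auto simp add: doubleton_eq_iff)
  have d3: "{z,b} \<noteq> {a,b}" if "a \<in> X" for a b using that assms(3) by (auto simp add: doubleton_eq_iff)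
  have tr: "{x,w} \<in> H" if xyw: "x \<in> X" "y \<in> X" "w \<in> X" "x \<noteq> y" "y \<noteq> w" "x \<noteq> w"
    and h1: "{x,y} \<in> H" and h2: "{y,w} \<in> H" for x y w
  proof (cases "{z,y} \<in> H")
    case True
    have "{z,x} \<in> H"
      using two[of x y "{z,y}" "{x,y}", OF xyw(1,2,4) _ _ d3[OF xyw(1)] True h1] by blast
    moreover have "{z,w} \<in> H"
      using two[of y w "{z,y}" "{y,w}", OF xyw(2,3,5) _ _ d2[OF xyw(3)] True h2] by blast
    ultimately show ?thesis
      using two[of x w "{z,x}" "{z,w}", OF xyw(1,3,6) _ _ d1[OF xyw(6)]] by blast
  next
    case False
    have "{z,x} \<notin> H"
    proof
      assume "{z,x} \<in> H"
      then show False
        using two[of x y "{z,x}" "{x,y}", OF xyw(1,2,4) _ _ d2[OF xyw(2)] _ h1] False by blast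
    qed
    moreover have "{z,w} \<notin> H"
    proof
      assume "{z,w} \<in> H"
      then show False
        using two[of y w "{z,w}" "{y,w}", OF xyw(2,3,5) _ _ d3[OF xyw(2)] _ h2] False by blast
    qed
    moreover have "{{z, x}, {z, w}, {x, w}} \<inter> H \<noteq> {}" by (rule meet[OF TL[OF xyw(1,3,6)]])
    ultimately show ?thesis by blast
  qed
  let ?R = "{(x, y). x \<in> X \<and> y \<in> X \<and> (x = y \<or> (x \<noteq> y \<and> {x, y} \<in> H))}"
  have "refl_on X ?R" unfolding refl_on_def by blast
  moreover have "sym ?R" unfolding sym_def by (auto simp: insert_commute)
  moreover have "trans ?R"
  proof (rule transI)
    fix a b c assume "(a,b) \<in> ?R" "(b,c) \<in> ?R"
    then have a: "a \<in> X" "b \<in> X" "c \<in> X" "a = b \<or> {a,b} \<in> H" "b = c \<or> {b,c} \<in> H" by auto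
    show "(a,c) \<in> ?R"
    proof (cases "a = b \<or> b = c \<or> a = c")
      case True then show ?thesis using a by (auto simp: insert_commute)
    next
      case False then show ?thesis using a tr[of a b c] by auto
    qed
  qed
  ultimately show ?thesis unfolding equiv_def by blast
qed

end
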